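(* Let $C\ge 3$ and $2\le\ell<C$ be integers, and let $r_1=1$ and $r_2,\dots,r_\ell\in(0,1]$. For $1\le k\le\ell$ put $R_k=\sum_{i=1}^k r_i$ and define, for $\Pi\in(0,1/R_k]$, $$S_{F_k}(\Pi)=-\sum_{i=1}^k r_i\Pi\log_2(r_i\Pi)-(1-R_k\Pi)\log_2(1-R_k\Pi)+(1-R_k\Pi)\log_2(C-k)$$ (with $0\log_2 0=0$). Then: (i) $S_{F_\ell}(\Pi)\le S_{F_{\ell-1}}(\Pi)$ for every $\Pi\in(0,1/R_\ell]$; (ii) if $S\in\mathbb R$, $\Pi_\ell\in(0,1/R_\ell]$ and $\Pi_{\ell-1}\in(0,1/R_{\ell-1}]$ satisfy $S_{F_\ell}(\Pi_\ell)=S=S_{F_{\ell-1}}(\Pi_{\ell-1})$, and $S_{F_{\ell-1}}$ is strictly decreasing on a subinterval of $(0,1/R_{\ell-1}]$ containing both $\Pi_\ell$ and $\Pi_{\ell-1}$, then $\Pi_{\ell-1}\ge\Pi_\ell$. Consequently, under these monotonicity hypotheses for each $k$, the bounds satisfy $\Pi^{\max}_{1,1}\ge\Pi^{\max}_{1,2}\ge\cdots\ge\Pi^{\max}_{1,\ell}$, where $\Pi^{\max}_{1,k}$ denotes the solution of $S_{F_k}(\Pi)=S$.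
   Context: $S_{F_k}(\Pi)$ is the Shannon entropy (in bits) of the probability vector on $C$ outcomes consisting of the $k$ masses $r_1\Pi,\dots,r_k\Pi$ (the top-$k$ candidates, with $r_i$ the ratio of the $i$-th candidate's probability to the largest one, $\Pi$) followed by $C-k$ equal masses $(1-R_k\Pi)/(C-k)$. $\Pi^{\max}_{1,k}$ is the top-1 predictability upper bound obtained from the top-$k$-aware Fano scaling for an estimated entropy value $S$; $\Pi^{\max}_{1,1}$ is the classical Fano bound. *)

theory Defs
  imports Complex_Main
begin

definition plog2 :: "real \<Rightarrow> real" where
  "plog2 x = (if x = 0 then 0 else x * log 2 x)"

definition Rsum :: "(nat \<Rightarrow> real) \<Rightarrow> nat \<Rightarrow> real" where
  "Rsum r k = (\<Sum>i=1..k. r i)"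

definition SF :: "nat \<Rightarrow> (nat \<Rightarrow> real) \<Rightarrow> nat \<Rightarrow> real \<Rightarrow> real" where
  "SF C r k P = - (\<Sum>i=1..k. plog2 (r i * P)) - plog2 (1 - Rsum r k * P)
      + (1 - Rsum r k * P) * log 2 (real (C - k))"

definition strict_decr_on :: "real set \<Rightarrow> (real \<Rightarrow> real) \<Rightarrow> bool" where
  "strict_decr_on I f \<longleftrightarrow> (\<forall>x\<in>I. \<forall>y\<in>I. x < y \<longrightarrow> f y < f x)"

end

theory Submission
  imports Defs
begin

lemma key_ln:
  fixes m x n :: real assumes m: "m > 0" and x: "x > 0" and n: "n \<ge> 1"
  shows "(m+x) * ln (m+x) - (m+x) * ln (n+1) \<le> m * ln m + x * ln x - m * ln n"
proof -
  define s where "s = m + x"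
  have s: "s > 0" using m x s_def by simp
  have h1: "ln (n*s/((n+1)*m)) \<le> n*s/((n+1)*m) - 1"
    by (rule ln_le_minus_one) (use m n s in simp)
  have h2: "ln (s/((n+1)*x)) \<le> s/((n+1)*x) - 1"
    by (rule ln_le_minus_one) (use x n s in simp)
  have h1': "m * ln (n*s/((n+1)*m)) \<le> n*s/(n+1) - m"
  proof -
    have "m * (n*s/((n+1)*m) - 1) = n*s/(n+1) - m"
    proof -
      have "n*s/((n+1)*m) = (n*s/(n+1))/m" by simp
      hence "m * (n*s/((n+1)*m)) = n*s/(n+1)" using m by simp
      thus ?thesis by (simp add: right_diff_distrib)
    qed
    thus ?thesis using mult_left_mono[OF h1, of m] m by linarith
  qed
  have h2': "x * ln (s/((n+1)*x)) \<le> s/(n+1) - x"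
  proof -
    have "x * (s/((n+1)*x) - 1) = s/(n+1) - x"
    proof -
      have "s/((n+1)*x) = (s/(n+1))/x" by simp
      hence "x * (s/((n+1)*x)) = s/(n+1)" using x by simp
      thus ?thesis by (simp add: right_diff_distrib)
    qed
    thus ?thesis using mult_left_mono[OF h2, of x] x by linarith
  qed
  have e1: "ln (n*s/((n+1)*m)) = ln n + ln s - ln (n+1) - ln m"
    using m n s by (simp add: ln_div ln_mult)
  have e2: "ln (s/((n+1)*x)) = ln s - ln (n+1) - ln x"
    using x n s by (simp add: ln_div ln_mult)
  have "n*s/(n+1) + s/(n+1) = (n+1)*s/(n+1)" by (simp add: add_divide_distrib[symmetric] algebra_simps)
  also have "\<dots> = s" using n by simp
  finally have "n*s/(n+1) + s/(n+1) = s" .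
  hence "m * (ln n + ln s - ln (n+1) - ln m) + x * (ln s - ln (n+1) - ln x) \<le> 0"
    using h1' h2' e1 e2 s_def by simp
  thus ?thesis unfolding s_def by (simp add: algebra_simps)
qed

lemma key:
  fixes m x n :: real assumes m: "m \<ge> 0" and x: "x > 0" and n: "n \<ge> 1"
  shows "plog2 (m+x) - (m+x) * log 2 (n+1) \<le> plog2 m + plog2 x - m * log 2 n"
proof (cases "m = 0")
  case True
  then show ?thesis using x n by (simp add: plog2_def)
next
  case False
  hence mp: "m > 0" using m by simp
  have "((m+x) * ln (m+x) - (m+x) * ln (n+1)) / ln 2 \<le> (m * ln m + x * ln x - m * ln n) / ln 2"
    using key_ln[OF mp x n] by (simp add: divide_right_mono)
  moreover have "plog2 (m+x) - (m+x) * log 2 (n+1) = ((m+x) * ln (m+x) - (m+x) * ln (n+1)) / ln 2"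
    using mp x unfolding plog2_def log_def by (simp add: diff_divide_distrib)
  moreover have "plog2 m + plog2 x - m * log 2 n = (m * ln m + x * ln x - m * ln n) / ln 2"
    using mp x unfolding plog2_def log_def by (simp add: diff_divide_distrib add_divide_distrib)
  ultimately show ?thesis by simp
qed

lemma step:
  fixes C l k :: nat and r :: "nat \<Rightarrow> real"
  assumes "C \<ge> 3" and "2 \<le> k" and "k \<le> l" and "l < C"
    and "r 1 = 1"
    and ri: "\<And>i. 2 \<le> i \<Longrightarrow> i \<le> l \<Longrightarrow> 0 < r i \<and> r i \<le> 1"
    and P: "P \<in> {0<..1 / Rsum r k}"
  shows "SF C r k P \<le> SF C r (k - 1) P"
proof -
  obtain j where j: "k = Suc j" "j \<ge> 1" using assms(2) by (cases k) auto
  have rk: "r k > 0" using ri assms by auto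
  have Rs: "Rsum r k = Rsum r j + r k" unfolding Rsum_def using j by simp
  have Rpos: "Rsum r k > 0"
  proof -
    have "\<forall>i\<in>{1..k}. r i > 0" using ri assms(5) assms(3) by (metis atLeastAtMost_iff le_antisym not_less_eq_eq numeral_2_eq_2 one_less_numeral_iff semiring_norm(76) linorder_not_le zero_less_one le_trans)
    thus ?thesis unfolding Rsum_def using j by (intro sum_pos) auto
  qed
  have Pp: "P > 0" and Pl: "P \<le> 1 / Rsum r k" using P by auto
  have "Rsum r k * P \<le> 1" using Pl Rpos by (simp add: field_simps)
  hence m: "1 - Rsum r k * P \<ge> 0" by simp
  have x: "r k * P > 0" using rk Pp by simp
  have nat1: "real (C - j) = real (C - k) + 1" using j assms by auto
  have n: "real (C - k) \<ge> 1" using assms by auto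
  note K = key[OF m x n]
  have eq: "1 - Rsum r k * P + r k * P = 1 - Rsum r j * P" using Rs by (simp add: algebra_simps)
  have K2: "plog2 (1 - Rsum r j * P) - (1 - Rsum r j * P) * log 2 (real (C - j))
     \<le> plog2 (1 - Rsum r k * P) + plog2 (r k * P) - (1 - Rsum r k * P) * log 2 (real (C - k))"
    using K by (simp only: eq nat1)
  have sums: "(\<Sum>i=1..k. plog2 (r i * P)) = (\<Sum>i=1..j. plog2 (r i * P)) + plog2 (r k * P)"
    using j by simp
  show ?thesis unfolding SF_def using K2 sums j by simp
qed


theorem mainTheorem4:
  fixes C l :: nat and r :: "nat \<Rightarrow> real"
  assumes "C \<ge> 3" and "2 \<le> l" and "l < C"
    and "r 1 = 1"
    and "\<And>i. 2 \<le> i \<Longrightarrow> i \<le> l \<Longrightarrow> 0 < r i \<and> r i \<le> 1"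
  shows
    "(\<forall>P\<in>{0<..1 / Rsum r l}. SF C r l P \<le> SF C r (l - 1) P)
     \<and> (\<forall>S Pl Pl1 a b.
          Pl \<in> {0<..1 / Rsum r l} \<and> Pl1 \<in> {0<..1 / Rsum r (l - 1)}
          \<and> SF C r l Pl = S \<and> SF C r (l - 1) Pl1 = S
          \<and> {a..b} \<subseteq> {0<..1 / Rsum r (l - 1)} \<and> Pl \<in> {a..b} \<and> Pl1 \<in> {a..b}
          \<and> strict_decr_on {a..b} (SF C r (l - 1))
          \<longrightarrow> Pl1 \<ge> Pl)
     \<and> (\<forall>S (Pmax :: nat \<Rightarrow> real).
          (\<forall>k\<in>{1..l}. Pmax k \<in> {0<..1 / Rsum r k} \<and> SF C r k (Pmax k) = S)
          \<and> (\<forall>k\<in>{2..l}. \<exists>a b. {a..b} \<subseteq> {0<..1 / Rsum r (k - 1)}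
                \<and> Pmax k \<in> {a..b} \<and> Pmax (k - 1) \<in> {a..b}
                \<and> strict_decr_on {a..b} (SF C r (k - 1)))
          \<longrightarrow> (\<forall>k\<in>{2..l}. Pmax k \<le> Pmax (k - 1)))"

proof -
  have A: "\<forall>k\<in>{2..l}. \<forall>P\<in>{0<..1 / Rsum r k}. SF C r k P \<le> SF C r (k - 1) P"
  proof (intro ballI)
    fix k P assume "k \<in> {2..l}" "P \<in> {0<..1 / Rsum r k}"
    thus "SF C r k P \<le> SF C r (k - 1) P" using step[of C k l r P] assms by auto
  qed
  have B: "\<And>k S Pk Pk1 a b. k \<in> {2..l} \<Longrightarrow> Pk \<in> {0<..1 / Rsum r k}
     \<Longrightarrow> SF C r k Pk = S \<Longrightarrow> SF C r (k - 1) Pk1 = S \<Longrightarrow> Pk \<in> {a..b} \<Longrightarrow> Pk1 \<in> {a..b}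
     \<Longrightarrow> strict_decr_on {a..b} (SF C r (k - 1)) \<Longrightarrow> Pk1 \<ge> Pk"
  proof (rule ccontr)
    fix k S Pk Pk1 a b
    assume h: "k \<in> {2..l}" "Pk \<in> {0<..1 / Rsum r k}" "SF C r k Pk = S" "SF C r (k - 1) Pk1 = S"
      "Pk \<in> {a..b}" "Pk1 \<in> {a..b}" "strict_decr_on {a..b} (SF C r (k - 1))" "\<not> Pk1 \<ge> Pk"
    have "Pk1 < Pk" using h(8) by simp
    hence "SF C r (k - 1) Pk < SF C r (k - 1) Pk1" using h(5,6,7) unfolding strict_decr_on_def by blast
    moreover have "SF C r k Pk \<le> SF C r (k - 1) Pk" using A h by blast
    ultimately show False using h by simp
  qed
  show ?thesis
  proof (intro conjI)
    show "\<forall>P\<in>{0<..1 / Rsum r l}. SF C r l P \<le> SF C r (l - 1) P" using A assms(2) by auto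
    show "\<forall>S Pl Pl1 a b.
          Pl \<in> {0<..1 / Rsum r l} \<and> Pl1 \<in> {0<..1 / Rsum r (l - 1)}
          \<and> SF C r l Pl = S \<and> SF C r (l - 1) Pl1 = S
          \<and> {a..b} \<subseteq> {0<..1 / Rsum r (l - 1)} \<and> Pl \<in> {a..b} \<and> Pl1 \<in> {a..b}
          \<and> strict_decr_on {a..b} (SF C r (l - 1))
          \<longrightarrow> Pl1 \<ge> Pl"
      using B[of l] assms(2) by auto
    show "\<forall>S (Pmax :: nat \<Rightarrow> real).
          (\<forall>k\<in>{1..l}. Pmax k \<in> {0<..1 / Rsum r k} \<and> SF C r k (Pmax k) = S)
          \<and> (\<forall>k\<in>{2..l}. \<exists>a b. {a..b} \<subseteq> {0<..1 / Rsum r (k - 1)}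
                \<and> Pmax k \<in> {a..b} \<and> Pmax (k - 1) \<in> {a..b}
                \<and> strict_decr_on {a..b} (SF C r (k - 1)))
          \<longrightarrow> (\<forall>k\<in>{2..l}. Pmax k \<le> Pmax (k - 1))"
    proof (intro allI impI ballI)
      fix S and Pmax :: "nat \<Rightarrow> real" and k
      assume H: "(\<forall>k\<in>{1..l}. Pmax k \<in> {0<..1 / Rsum r k} \<and> SF C r k (Pmax k) = S)
          \<and> (\<forall>k\<in>{2..l}. \<exists>a b. {a..b} \<subseteq> {0<..1 / Rsum r (k - 1)}
                \<and> Pmax k \<in> {a..b} \<and> Pmax (k - 1) \<in> {a..b}
                \<and> strict_decr_on {a..b} (SF C r (k - 1)))" and k: "k \<in> {2..l}"
      then obtain a b where ab: "Pmax k \<in> {a..b}" "Pmax (k - 1) \<in> {a..b}"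
         "strict_decr_on {a..b} (SF C r (k - 1))" by blast
      have k1: "k - 1 \<in> {1..l}" "k \<in> {1..l}" using k by auto
      show "Pmax k \<le> Pmax (k - 1)"
        using B[OF k, of "Pmax k" S "Pmax (k - 1)" a b] H k1 ab by blast
    qed
  qed
qed

end
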